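(* Let $U:\mathbb{R}^d\to\mathbb{R}$ be twice continuously differentiable with $\nabla U(0)=0$ and $\sup_x\|\mathrm{D}^2U(x)\|\le\mathtt{L}$, and assume there exist $\mathtt{m}>0$, $\mathtt{K}\ge0$ with $\mathrm{D}^2U(x)[y,y]\ge\mathtt{m}$ whenever $\|x\|\ge\mathtt{K}$, $\|y\|=1$. Let $\bar\gamma\in(0,\mathtt{m}^3/(4\mathtt{L}^4)]$, $\epsilon=(\mathtt{m}^3/2^4)\{2^{1/2}\mathtt{L}^2+2^{-3/2}\bar\gamma^{1/2}\mathtt{L}^3\}^{-1}$ and $$C_{2,\bar\gamma}=2\mathtt{L}+2^{1/2}\mathtt{L}^2\epsilon^{-1}+(\bar\gamma/2)\mathtt{L}^2+2^{-3/2}\bar\gamma^{3/2}\mathtt{L}^3\epsilon^{-1}.$$ Let $\tilde{\mathtt{K}}=2\mathtt{K}(1+\mathtt{L}/\mathtt{m})$. Then for all $\gamma\in(0,\bar\gamma]$ and $x,z\in\mathbb{R}^d$ with $\|x\|\ge\max(2\mathtt{K},\tilde{\mathtt{K}})$ and $\|z\|\le\|x\|/(4\sqrt{2\gamma})$, $$\tau_\gamma(x,z)\le C_{2,\bar\gamma}\gamma\|z\|^2.$$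
   Context: For $\gamma>0$ and $x,z\in\mathbb{R}^d$, $\tau_\gamma(x,z)=U(x-\gamma\nabla U(x)+\sqrt{2\gamma}z)-U(x)+\frac12\big\{\|z-(\gamma/2)^{1/2}[\nabla U(x)+\nabla U(x-\gamma\nabla U(x)+\sqrt{2\gamma}z)]\|^2-\|z\|^2\big\}$. *)

theory Defs
  imports "HOL-Analysis.Analysis"
begin

text \<open>The quantity tau_gamma(x,z) of the paper; U is the potential and gU its gradient.\<close>
definition tau :: "('a::euclidean_space \<Rightarrow> real) \<Rightarrow> ('a \<Rightarrow> 'a) \<Rightarrow> real \<Rightarrow> 'a \<Rightarrow> 'a \<Rightarrow> real" where
  "tau U gU \<gamma> x z =
     (let y = x - \<gamma> *\<^sub>R gU x + sqrt (2 * \<gamma>) *\<^sub>R z in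
      U y - U x + (1/2) * ((norm (z - sqrt (\<gamma> / 2) *\<^sub>R (gU x + gU y)))\<^sup>2 - (norm z)\<^sup>2))"

end

theory Submission
  imports Defs
begin

lemma alg:
  fixes gx gy z :: "'a::real_inner"
  assumes "a * a = \<gamma> / 2"
  shows "gy \<bullet> (- \<gamma> *\<^sub>R gx + (2*a) *\<^sub>R z) + (1/2)*((norm (z - a *\<^sub>R (gx+gy)))\<^sup>2 - (norm z)\<^sup>2)
     = a*(z \<bullet> (gy - gx)) + \<gamma>/4 * (norm (gy-gx))\<^sup>2"
proof -
  have "gy \<bullet> (- \<gamma> *\<^sub>R gx + (2*a) *\<^sub>R z) + (1/2)*((norm (z - a *\<^sub>R (gx+gy)))\<^sup>2 - (norm z)\<^sup>2)
     = - \<gamma> * (gx \<bullet> gy) + a * (z \<bullet> gy) - a * (z \<bullet> gx) + (a*a)/2 * (gx \<bullet> gx + 2 * (gx \<bullet> gy) + gy \<bullet> gy)"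
    unfolding power2_norm_eq_inner
    by (simp add: inner_diff_left inner_diff_right inner_add_left inner_add_right inner_commute algebra_simps)
  also have "\<dots> = a*(z \<bullet> (gy - gx)) + \<gamma>/4 * (norm (gy-gx))\<^sup>2"
    unfolding power2_norm_eq_inner assms
    by (simp add: inner_diff_left inner_diff_right inner_commute algebra_simps)
  finally show ?thesis .
qed

lemma quad_lb:
  fixes H :: "'a::euclidean_space \<Rightarrow> 'a \<Rightarrow>\<^sub>L 'a"
  assumes convex_out: "\<And>x y. norm x \<ge> K \<Longrightarrow> norm y = 1 \<Longrightarrow> y \<bullet> H x y \<ge> m"
    and "norm p \<ge> K"
  shows "d \<bullet> H p d \<ge> m * (norm d)\<^sup>2"
proof (cases "d = 0")
  case True then show ?thesis by (simp add: blinfun.zero_right)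
next
  case False
  let ?u = "(1 / norm d) *\<^sub>R d"
  have "norm ?u = 1" using False by simp
  then have "?u \<bullet> H p ?u \<ge> m" using convex_out assms(2) by blast
  also have "?u \<bullet> H p ?u = (d \<bullet> H p d) / (norm d)\<^sup>2"
    by (simp add: blinfun.scaleR_right power2_eq_square)
  finally show ?thesis using False by (simp add: field_simps)
qed

lemma strong_conv:
  fixes U :: "'a::euclidean_space \<Rightarrow> real" and gU :: "'a \<Rightarrow> 'a"
    and H :: "'a \<Rightarrow> 'a \<Rightarrow>\<^sub>L 'a"
  assumes grad: "\<And>x. (U has_derivative (\<lambda>h. gU x \<bullet> h)) (at x)"
    and hess: "\<And>x. (gU has_derivative blinfun_apply (H x)) (at x)"
    and convex_out: "\<And>x y. norm x \<ge> K \<Longrightarrow> norm y = 1 \<Longrightarrow> y \<bullet> H x y \<ge> m"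
    and seg: "\<And>t. 0 \<le> t \<Longrightarrow> t \<le> 1 \<Longrightarrow> norm (p + t *\<^sub>R d) \<ge> K"
  shows "U (p + d) \<ge> U p + gU p \<bullet> d + m / 2 * (norm d)\<^sup>2"
proof -
  define \<psi> where "\<psi> t = gU (p + t *\<^sub>R d) \<bullet> d - gU p \<bullet> d - m * t * (norm d)\<^sup>2" for t
  define \<phi> where "\<phi> t = U (p + t *\<^sub>R d) - U p - t * (gU p \<bullet> d) - m / 2 * t\<^sup>2 * (norm d)\<^sup>2" for t
  have dl: "((\<lambda>t::real. p + t *\<^sub>R d) has_derivative (\<lambda>h. h *\<^sub>R d)) (at t)" for t
    by (auto intro!: derivative_eq_intros)
  have dU: "((\<lambda>t. U (p + t *\<^sub>R d)) has_real_derivative (gU (p + t *\<^sub>R d) \<bullet> d)) (at t)" for t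
  proof -
    have "((\<lambda>t. U (p + t *\<^sub>R d)) has_derivative (\<lambda>h. gU (p + t *\<^sub>R d) \<bullet> (h *\<^sub>R d))) (at t)"
      using has_derivative_compose[OF dl grad] by simp
    then show ?thesis unfolding has_field_derivative_def
      by (rule has_derivative_eq_rhs) (auto simp: fun_eq_iff)
  qed
  have dg: "((\<lambda>t. gU (p + t *\<^sub>R d) \<bullet> d) has_real_derivative (H (p + t *\<^sub>R d) d \<bullet> d)) (at t)" for t
  proof -
    have "((\<lambda>t. gU (p + t *\<^sub>R d)) has_derivative (\<lambda>h. H (p + t *\<^sub>R d) (h *\<^sub>R d))) (at t)"
      using has_derivative_compose[OF dl hess] by simp
    then have "((\<lambda>t. gU (p + t *\<^sub>R d) \<bullet> d) has_derivative (\<lambda>h. H (p + t *\<^sub>R d) (h *\<^sub>R d) \<bullet> d)) (at t)"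
      by (rule has_derivative_inner_left)
    then show ?thesis unfolding has_field_derivative_def
      by (rule has_derivative_eq_rhs) (auto simp: fun_eq_iff blinfun.scaleR_right)
  qed
  have dpsi: "(\<psi> has_real_derivative (H (p + t *\<^sub>R d) d \<bullet> d - m * (norm d)\<^sup>2)) (at t)" for t
    unfolding \<psi>_def[abs_def]
    by (rule derivative_eq_intros dg refl | simp)+
  have dphi: "(\<phi> has_real_derivative \<psi> t) (at t)" for t
    unfolding \<phi>_def[abs_def] \<psi>_def
    by (rule derivative_eq_intros dU refl | simp add: field_simps)+
  have psi_nn: "\<psi> t \<ge> 0" if "0 \<le> t" "t \<le> 1" for t
  proof -
    have "\<psi> 0 \<le> \<psi> t"
    proof (rule DERIV_nonneg_imp_nondecreasing[OF that(1)])
      fix s assume "0 \<le> s" "s \<le> t"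
      then have "norm (p + s *\<^sub>R d) \<ge> K" using seg that by auto
      then have "d \<bullet> H (p + s *\<^sub>R d) d \<ge> m * (norm d)\<^sup>2"
        using quad_lb[where K=K and H=H and m=m, OF convex_out] by blast
      then show "\<exists>y. (\<psi> has_real_derivative y) (at s) \<and> y \<ge> 0"
        using dpsi by (metis diff_ge_0_iff_ge inner_commute)
    qed
    then show ?thesis by (simp add: \<psi>_def)
  qed
  have "\<phi> 0 \<le> \<phi> 1"
  proof (rule DERIV_nonneg_imp_nondecreasing[of 0 1 \<phi>])
    fix s :: real assume "0 \<le> s" "s \<le> 1"
    then show "\<exists>y. (\<phi> has_real_derivative y) (at s) \<and> y \<ge> 0"
      using dphi psi_nn by blast
  qed simp
  then show ?thesis by (simp add: \<phi>_def)
qed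

theorem lemma2:
  fixes U :: "'a::euclidean_space \<Rightarrow> real"
    and gU :: "'a \<Rightarrow> 'a"
    and H :: "'a \<Rightarrow> 'a \<Rightarrow>\<^sub>L 'a"
    and L m K \<gamma>bar :: real
  assumes grad: "\<And>x. (U has_derivative (\<lambda>h. gU x \<bullet> h)) (at x)"
    and hess: "\<And>x. (gU has_derivative blinfun_apply (H x)) (at x)"
    and hess_cont: "continuous_on UNIV H"
    and grad0: "gU 0 = 0"
    and Lbound: "\<And>x. norm (H x) \<le> L"
    and m_pos: "m > 0" and K_nonneg: "K \<ge> 0"
    and convex_out: "\<And>x y. norm x \<ge> K \<Longrightarrow> norm y = 1 \<Longrightarrow> y \<bullet> H x y \<ge> m"
    and gbar_pos: "\<gamma>bar > 0" and gbar_le: "\<gamma>bar \<le> m ^ 3 / (4 * L ^ 4)"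
  shows "let \<epsilon> = (m ^ 3 / 2 ^ 4) / (sqrt 2 * L\<^sup>2 + 2 powr (-3/2) * sqrt \<gamma>bar * L ^ 3);
             C = 2 * L + sqrt 2 * L\<^sup>2 / \<epsilon> + (\<gamma>bar / 2) * L\<^sup>2
                 + 2 powr (-3/2) * \<gamma>bar powr (3/2) * L ^ 3 / \<epsilon>;
             Kt = 2 * K * (1 + L / m)
         in \<forall>\<gamma> x z. 0 < \<gamma> \<and> \<gamma> \<le> \<gamma>bar \<and> norm x \<ge> max (2 * K) Kt
                  \<and> norm z \<le> norm x / (4 * sqrt (2 * \<gamma>))
                \<longrightarrow> tau U gU \<gamma> x z \<le> C * \<gamma> * (norm z)\<^sup>2"
proof -
  obtain e :: 'a where e: "e \<in> Basis" using nonempty_Basis by blast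
  then have ne: "norm e = 1" by simp
  have "norm ((K + 1) *\<^sub>R e) \<ge> K" using ne K_nonneg by simp
  then have "m \<le> e \<bullet> H ((K + 1) *\<^sub>R e) e" using convex_out ne by blast
  also have "\<dots> \<le> norm e * norm (H ((K + 1) *\<^sub>R e) e)" by (rule norm_cauchy_schwarz)
  also have "\<dots> \<le> norm (H ((K + 1) *\<^sub>R e)) * norm e" using ne norm_blinfun[of "H ((K + 1) *\<^sub>R e)" e] by simp
  also have "\<dots> \<le> L" using ne Lbound by simp
  finally have mL: "m \<le> L" .
  have Lpos: "L > 0" using mL m_pos by simp
  have lip: "norm (gU u - gU v) \<le> L * norm (u - v)" for u v
    by (rule differentiable_bound[of UNIV gU "\<lambda>x. blinfun_apply (H x)"])
       (auto intro: has_derivative_at_withinI hess simp: norm_blinfun.rep_eq[symmetric] Lbound)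
  define \<epsilon> where "\<epsilon> = (m ^ 3 / 2 ^ 4) / (sqrt 2 * L\<^sup>2 + 2 powr (-3/2) * sqrt \<gamma>bar * L ^ 3)"
  define C where "C = 2 * L + sqrt 2 * L\<^sup>2 / \<epsilon> + (\<gamma>bar / 2) * L\<^sup>2
                 + 2 powr (-3/2) * \<gamma>bar powr (3/2) * L ^ 3 / \<epsilon>"
  have C_ge: "C \<ge> L\<^sup>2 / (2 * m)"
  proof -
    define D where "D = sqrt 2 * L\<^sup>2 + 2 powr (-3/2) * sqrt \<gamma>bar * L ^ 3"
    have D2: "D \<ge> sqrt 2 * L\<^sup>2" using Lpos gbar_pos by (simp add: D_def)
    have "sqrt 2 * L\<^sup>2 > 0" using Lpos by simp
    then have Dpos: "D > 0" using D2 by linarith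
    have eps: "\<epsilon> = (m^3/2^4)/D" by (simp add: \<epsilon>_def D_def)
    have "sqrt 2 * L\<^sup>2 / \<epsilon> = 16 * sqrt 2 * L\<^sup>2 * D / m ^ 3"
      using m_pos Dpos by (simp add: eps field_simps)
    also have "\<dots> \<ge> 16 * sqrt 2 * L\<^sup>2 * (sqrt 2 * L\<^sup>2) / m ^ 3"
      using D2 m_pos by (intro divide_right_mono mult_left_mono) auto
    also have "16 * sqrt 2 * L\<^sup>2 * (sqrt 2 * L\<^sup>2) / m ^ 3 = 32 * L^4 / m^3"
      by (simp add: power2_eq_square power4_eq_xxxx algebra_simps)
    finally have t1: "sqrt 2 * L\<^sup>2 / \<epsilon> \<ge> 32 * L^4 / m^3" .
    have "L^4 / m^3 \<ge> L^2 / m"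
    proof -
      have "L^2 * m^2 \<le> L^2 * L^2" using mL m_pos by (intro mult_left_mono power_mono) auto
      then show ?thesis using m_pos by (simp add: field_simps power2_eq_square power3_eq_cube power4_eq_xxxx)
    qed
    moreover have "\<epsilon> > 0" using Dpos m_pos by (simp add: eps)
    moreover have "0 \<le> 2 powr (-3/2) * \<gamma>bar powr (3/2) * L ^ 3 / \<epsilon>"
      using Lpos calculation by simp
    moreover have "0 \<le> (\<gamma>bar / 2) * L\<^sup>2" using gbar_pos by simp
    moreover have "L\<^sup>2 / (2*m) \<le> L\<^sup>2 / m" using m_pos by (simp add: field_simps)
    ultimately show ?thesis using t1 Lpos unfolding C_def by linarith
  qed
  show ?thesis
    unfolding Let_def \<epsilon>_def[symmetric] C_def[symmetric]
  proof (intro allI impI, elim conjE)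
    fix \<gamma> :: real and x z :: 'a
    assume g0: "0 < \<gamma>" and ggb: "\<gamma> \<le> \<gamma>bar" and xb: "max (2 * K) (2 * K * (1 + L / m)) \<le> norm x"
      and zb: "norm z \<le> norm x / (4 * sqrt (2 * \<gamma>))"
    have g4: "\<gamma> * L^4 \<le> m^3 / 4"
    proof -
      have "\<gamma> * L^4 \<le> \<gamma>bar * L^4" using ggb Lpos by (intro mult_right_mono) auto
      also have "\<dots> \<le> m ^ 3 / (4 * L ^ 4) * L^4" using gbar_le Lpos by (intro mult_right_mono) auto
      also have "\<dots> = m^3/4" using Lpos by simp
      finally show ?thesis .
    qed
    have m2: "m^2 \<le> L^2" using mL m_pos by (intro power_mono) auto
    have m3: "m^3 \<le> L^3" using mL m_pos by (intro power_mono) auto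
    have gL2: "\<gamma> * L\<^sup>2 \<le> m / 4"
    proof -
      have "(\<gamma> * L\<^sup>2) * L^2 \<le> (m/4) * L^2"
      proof -
        have "(\<gamma> * L\<^sup>2) * L^2 = \<gamma> * L^4" by (simp add: power4_eq_xxxx power2_eq_square)
        also have "\<dots> \<le> m^3/4" by (rule g4)
        also have "\<dots> = (m/4) * m^2" by (simp add: power2_eq_square power3_eq_cube)
        also have "\<dots> \<le> (m/4) * L^2" using m2 m_pos by (intro mult_left_mono) auto
        finally show ?thesis .
      qed
      then show ?thesis using Lpos by simp
    qed
    have gL: "\<gamma> * L \<le> 1 / 4"
    proof -
      have "(\<gamma> * L) * L^3 \<le> (1/4) * L^3"
      proof -
        have "(\<gamma> * L) * L^3 = \<gamma> * L^4" by (simp add: power4_eq_xxxx power3_eq_cube)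
        also have "\<dots> \<le> m^3/4" by (rule g4)
        also have "\<dots> \<le> (1/4) * L^3" using m3 by simp
        finally show ?thesis .
      qed
      then show ?thesis using Lpos by simp
    qed
    define a where "a = sqrt (\<gamma> / 2)"
    have a_sq: "a * a = \<gamma> / 2" using g0 by (simp add: a_def)
    have a_nn: "a \<ge> 0" using g0 by (simp add: a_def)
    have s2a: "sqrt (2 * \<gamma>) = 2 * a"
    proof -
      have "sqrt (2 * \<gamma>) = sqrt (4 * (\<gamma> / 2))" by simp
      also have "\<dots> = 2 * a" unfolding a_def real_sqrt_mult by simp
      finally show ?thesis .
    qed
    define d where "d = - \<gamma> *\<^sub>R gU x + sqrt (2 * \<gamma>) *\<^sub>R z"
    define y where "y = x + d"
    have y_eq: "x - \<gamma> *\<^sub>R gU x + sqrt (2 * \<gamma>) *\<^sub>R z = y" by (simp add: y_def d_def)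
    have gx: "norm (gU x) \<le> L * norm x" using lip[of x 0] grad0 by simp
    have sg: "sqrt (2 * \<gamma>) > 0" using g0 by simp
    have zz: "sqrt (2 * \<gamma>) * norm z \<le> norm x / 4"
      using zb sg by (simp add: field_simps)
    have "norm d \<le> \<gamma> * norm (gU x) + sqrt (2 * \<gamma>) * norm z"
      unfolding d_def using norm_triangle_ineq[of "- \<gamma> *\<^sub>R gU x" "sqrt (2 * \<gamma>) *\<^sub>R z"] g0 by simp
    also have "\<gamma> * norm (gU x) \<le> \<gamma> * L * norm x" using gx g0 by (simp add: mult_left_mono mult.assoc)
    also have "\<gamma> * L * norm x \<le> (1/4) * norm x" using gL by (intro mult_right_mono) auto
    finally have nd: "norm d \<le> norm x / 2" using zz by simp
    have xK: "norm x \<ge> 2 * K" using xb by simp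
    have seg: "norm (y + t *\<^sub>R (- d)) \<ge> K" if "0 \<le> t" "t \<le> 1" for t
    proof -
      have "y + t *\<^sub>R (- d) = x + (1 - t) *\<^sub>R d" by (simp add: y_def algebra_simps)
      moreover have "norm ((1 - t) *\<^sub>R d) \<le> norm d" using that by (simp add: mult_left_le_one_le)
      moreover have "norm (x + (1 - t) *\<^sub>R d) \<ge> norm x - norm ((1 - t) *\<^sub>R d)"
        using norm_triangle_ineq2[of x "- ((1 - t) *\<^sub>R d)"] by simp
      ultimately have "norm (y + t *\<^sub>R (- d)) \<ge> norm x - norm d" by simp
      then show ?thesis using nd xK by simp
    qed
    have conv: "U (y + - d) \<ge> U y + gU y \<bullet> (- d) + m / 2 * (norm (- d))\<^sup>2"
      by (rule strong_conv[OF grad hess convex_out seg])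
    then have conv': "U y - U x \<le> gU y \<bullet> d - m / 2 * (norm d)\<^sup>2" by (simp add: y_def)
    have d2: "d = - \<gamma> *\<^sub>R gU x + (2*a) *\<^sub>R z" by (simp add: d_def s2a)
    have "tau U gU \<gamma> x z = U y - U x + (1/2) * ((norm (z - a *\<^sub>R (gU x + gU y)))\<^sup>2 - (norm z)\<^sup>2)"
      unfolding tau_def Let_def y_eq a_def ..
    also have "\<dots> \<le> gU y \<bullet> d + (1/2) * ((norm (z - a *\<^sub>R (gU x + gU y)))\<^sup>2 - (norm z)\<^sup>2) - m / 2 * (norm d)\<^sup>2"
      using conv' by simp
    also have "\<dots> = a*(z \<bullet> (gU y - gU x)) + \<gamma>/4 * (norm (gU y - gU x))\<^sup>2 - m / 2 * (norm d)\<^sup>2"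
      unfolding d2 alg[OF a_sq] ..
    finally have t1: "tau U gU \<gamma> x z \<le> a*(z \<bullet> (gU y - gU x)) + \<gamma>/4 * (norm (gU y - gU x))\<^sup>2 - m / 2 * (norm d)\<^sup>2" .
    have lg: "norm (gU y - gU x) \<le> L * norm d" using lip[of y x] by (simp add: y_def)
    have "z \<bullet> (gU y - gU x) \<le> norm z * norm (gU y - gU x)" by (rule norm_cauchy_schwarz)
    also have "\<dots> \<le> norm z * (L * norm d)" using lg by (simp add: mult_left_mono)
    finally have b1: "a*(z \<bullet> (gU y - gU x)) \<le> a * L * norm z * norm d"
      using mult_left_mono[OF _ a_nn] by (metis mult.assoc mult.left_commute)
    have "(norm (gU y - gU x))\<^sup>2 \<le> (L * norm d)\<^sup>2" using lg by (intro power_mono) auto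
    then have b2: "\<gamma>/4 * (norm (gU y - gU x))\<^sup>2 \<le> \<gamma>/4 * L\<^sup>2 * (norm d)\<^sup>2"
      using g0 by (simp add: power_mult_distrib mult_left_mono)
    define t where "t = norm d"
    define w where "w = norm z"
    have amgm: "a * L * w * t \<le> m/4 * t\<^sup>2 + (a * L * w)\<^sup>2 / m"
    proof -
      define b where "b = a * L * w"
      have "0 \<le> (m * t / 2 - b)\<^sup>2 / m" using m_pos by simp
      also have "(m * t / 2 - b)\<^sup>2 / m = m/4 * t\<^sup>2 - b * t + b\<^sup>2 / m"
        using m_pos by (simp add: power2_eq_square field_simps)
      finally show ?thesis unfolding b_def by linarith
    qed
    have "(a * L * w)\<^sup>2 = \<gamma> / 2 * L\<^sup>2 * w\<^sup>2" using a_sq by (simp add: power2_eq_square algebra_simps)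
    have "\<gamma>/4 * L\<^sup>2 * t\<^sup>2 \<le> m/4 * t\<^sup>2"
    proof -
      have "0 \<le> \<gamma> * L\<^sup>2" using g0 by simp
      then have "\<gamma>/4 * L\<^sup>2 \<le> m/4" using gL2 by simp
      then show ?thesis by (intro mult_right_mono) auto
    qed
    have "tau U gU \<gamma> x z \<le> (a * L * w)\<^sup>2 / m"
      using t1 b1 b2 amgm \<open>\<gamma>/4 * L\<^sup>2 * t\<^sup>2 \<le> m/4 * t\<^sup>2\<close> unfolding t_def w_def by linarith
    also have "\<dots> = (L\<^sup>2 / (2*m)) * (\<gamma> * w\<^sup>2)"
      unfolding \<open>(a * L * w)\<^sup>2 = \<gamma> / 2 * L\<^sup>2 * w\<^sup>2\<close> using m_pos by (simp add: field_simps)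
    also have "\<dots> \<le> C * (\<gamma> * w\<^sup>2)" using C_ge g0 by (intro mult_right_mono) auto
    finally show "tau U gU \<gamma> x z \<le> C * \<gamma> * (norm z)\<^sup>2" by (simp add: w_def mult.assoc)
  qed
qed

end
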